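(* Let $f:\mathrm{I}\to\mathbb{R}$ be a convex function on an interval $\mathrm{I}\subseteq\mathbb{R}$, let $\Gamma\subseteq\mathcal{M}_b(\mathcal{H})$, let $\P\in\mathcal{P}(\mathcal{H})$ be a fixed distribution (not depending on the sample), let $\delta\in[0,1]$, and for every sample $\mathcal{S}\in\mathcal{Z}^m$ let $\phi_{\mathcal{S}}\in\Gamma$. Assume there exists a function $B^{\P}$ such that for any $\mathcal{S}$ and $\P$, $\Lambda^{\P}_f(\phi_{\mathcal{S}})\le B^{\P}(\phi_{\mathcal{S}})$. Assume moreover the bounded-difference property: there are constants $c_1,\dots,c_m$ such that for all $i\in\{1,\dots,m\}$, \[ \sup_{\mathcal{S}\in\mathcal{Z}^m,\ z_i'\in\mathcal{Z}}\big|B^{\P}(\phi_{\mathcal{S}})-B^{\P}(\phi_{\mathcal{S}'_i})\big|\le c_i, \] where $\mathcal{S}'_i$ is the sample $\mathcal{S}$ with $z_i$ replaced by $z_i'$. Then with probability at least $1-\delta$ over $\mathcal{S}\sim\mathcal{D}^m$, for all $\rho\in\mathcal{P}(\mathcal{H})$, \[ \mathbb{E}_{h\sim\rho}\phi_{\mathcal{S}}(h)\le D^{\Gamma}_f(\rho\|\P)+\mathbb{E}_{\mathcal{S}\sim\mathcal{D}^m}B^{\P}(\phi_{\mathcal{S}})+\sqrt{\frac{\ln\frac{1}{\delta}}{2}\sum_{i=1}^m c_i^2}. \]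
   Context: $\mathcal{H}$ is a hypothesis space, $\mathcal{Z}$ a data space, $\mathcal{D}$ an unknown distribution on $\mathcal{Z}$, and $\mathcal{S}=\{z_1,\dots,z_m\}\sim\mathcal{D}^m$ an i.i.d. sample. $\mathcal{P}(\mathcal{H})$ is the set of probability distributions on $\mathcal{H}$ and $\mathcal{M}_b(\mathcal{H})$ the set of bounded measurable functions $\mathcal{H}\to\mathbb{R}$. $f^*(y)=\sup_{x\in\mathrm{I}}\{xy-f(x)\}$ is the Legendre transform of $f$. For $\varphi\in\mathcal{M}_b(\mathcal{H})$, $\Lambda^{\P}_{f}(\varphi):=\inf_{c\in\mathbb{R}}\{c+\mathbb{E}_{h\sim\P}f^*(\varphi(h)-c)\}$. The $(f,\Gamma)$-divergence is $D^{\Gamma}_f(\rho\|\P):=\sup_{\varphi\in\Gamma}\{\mathbb{E}_{h\sim\rho}\varphi(h)-\Lambda^{\P}_f(\varphi)\}$. *)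

theory Defs
  imports "HOL-Probability.Probability"
begin

definition legendre :: "real set \<Rightarrow> (real \<Rightarrow> real) \<Rightarrow> real \<Rightarrow> ereal" where
  "legendre I f y = (SUP x\<in>I. ereal (x * y - f x))"

text \<open>Expectation of an extended-real valued function (positive part minus negative part).\<close>
definition eexpect :: "'a measure \<Rightarrow> ('a \<Rightarrow> ereal) \<Rightarrow> ereal" where
  "eexpect M g = enn2ereal (\<integral>\<^sup>+ x. e2ennreal (g x) \<partial>M) - enn2ereal (\<integral>\<^sup>+ x. e2ennreal (- g x) \<partial>M)"

definition Lambda_f :: "real set \<Rightarrow> (real \<Rightarrow> real) \<Rightarrow> 'h measure \<Rightarrow> ('h \<Rightarrow> real) \<Rightarrow> ereal" where
  "Lambda_f I f P \<phi> = (INF c::real. ereal c + eexpect P (\<lambda>h. legendre I f (\<phi> h - c)))"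

definition fGamma_div :: "real set \<Rightarrow> (real \<Rightarrow> real) \<Rightarrow> ('h \<Rightarrow> real) set \<Rightarrow> 'h measure \<Rightarrow> 'h measure \<Rightarrow> ereal" where
  "fGamma_div I f \<Gamma> \<rho> P = (SUP \<phi>\<in>\<Gamma>. ereal (\<integral>h. \<phi> h \<partial>\<rho>) - Lambda_f I f P \<phi>)"

definition bounded_measurable :: "'h measure \<Rightarrow> ('h \<Rightarrow> real) set" where
  "bounded_measurable H = {g. g \<in> borel_measurable H \<and> bounded (g ` space H)}"

definition prob_dists :: "'h measure \<Rightarrow> 'h measure set" where
  "prob_dists H = {\<rho>. prob_space \<rho> \<and> sets \<rho> = sets H}"

end

theory Submission
  imports Defs
begin

lemma upd_space_ins:
  assumes "x \<in> space (Pi\<^sub>M I M)" "i \<notin> I" "z \<in> space (M i)"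
  shows "x(i:=z) \<in> space (Pi\<^sub>M (insert i I) M)"
  using measurable_space[OF measurable_component_update[OF assms(1,2)] assms(3)] .

lemma upd_space_in:
  assumes "x \<in> space (Pi\<^sub>M I M)" "i \<in> I" "z \<in> space (M i)"
  shows "x(i:=z) \<in> space (Pi\<^sub>M I M)"
  using assms by (auto simp: space_PiM PiE_def extensional_def Pi_iff)

lemma abs_integral_bound:
  fixes f :: "'a \<Rightarrow> real"
  assumes "prob_space M" "f \<in> borel_measurable M" "\<And>x. x \<in> space M \<Longrightarrow> \<bar>f x\<bar> \<le> C"
  shows "\<bar>integral\<^sup>L M f\<bar> \<le> C"
proof -
  interpret prob_space M by fact
  have int: "integrable M f"
    using assms by (intro integrable_const_bound[where B=C]) auto
  have bnd: "-C \<le> f x \<and> f x \<le> C" if "x \<in> space M" for x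
    using assms(3)[OF that] by arith
  have "integral\<^sup>L M f \<le> integral\<^sup>L M (\<lambda>_. C)"
    using bnd int by (intro integral_mono) auto
  moreover have "integral\<^sup>L M (\<lambda>_. - C) \<le> integral\<^sup>L M f"
    using bnd int by (intro integral_mono) auto
  ultimately show ?thesis by (simp add: prob_space)
qed

lemma mgf_bound:
  fixes D :: "'z measure" and c :: "nat \<Rightarrow> real" and l :: real
  assumes D: "prob_space D" and l: "l > 0"
  shows "\<And>g K. g \<in> borel_measurable (Pi\<^sub>M {..<n} (\<lambda>_. D)) \<Longrightarrow>
     (\<forall>S\<in>space (Pi\<^sub>M {..<n} (\<lambda>_. D)). \<bar>g S\<bar> \<le> K) \<Longrightarrow>
     (\<forall>i<n. \<forall>S\<in>space (Pi\<^sub>M {..<n} (\<lambda>_. D)). \<forall>z\<in>space D. \<bar>g S - g (S(i:=z))\<bar> \<le> c i) \<Longrightarrow>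
     (\<integral>\<^sup>+S. ennreal (exp (l * (g S - (\<integral>S'. g S' \<partial>Pi\<^sub>M {..<n} (\<lambda>_. D))))) \<partial>Pi\<^sub>M {..<n} (\<lambda>_. D))
       \<le> ennreal (exp (l\<^sup>2 * (\<Sum>i<n. (c i)\<^sup>2) / 8))"
proof (induction n)
  case 0
  interpret product_prob_space "\<lambda>_::nat. D" using D by (simp add: product_prob_space_def product_prob_space_axioms_def product_sigma_finite_def prob_space_imp_sigma_finite)
  let ?M = "Pi\<^sub>M ({..<0::nat}) (\<lambda>_. D)"
  interpret PP: prob_space ?M by (rule prob_space_PiM) (simp add: D)
  have sp: "space ?M = {\<lambda>_. undefined}" by (simp add: space_PiM)
  have "(\<integral>S. g S \<partial>?M) = (\<integral>S. g (\<lambda>_. undefined) \<partial>?M)"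
    by (intro Bochner_Integration.integral_cong) (auto simp: space_PiM)
  also have "\<dots> = g (\<lambda>_. undefined)" using PP.prob_space by simp
  finally have E: "(\<integral>S. g S \<partial>?M) = g (\<lambda>_. undefined)" .
  have "(\<integral>\<^sup>+S. ennreal (exp (l * (g S - (\<integral>S'. g S' \<partial>?M)))) \<partial>?M) = (\<integral>\<^sup>+S. 1 \<partial>?M)"
    by (intro nn_integral_cong) (auto simp: space_PiM E[simplified])
  also have "\<dots> = 1" using PP.emeasure_space_1 by simp
  finally show ?case by simp
next
  case (Suc n)
  interpret product_prob_space "\<lambda>_::nat. D" using D by (simp add: product_prob_space_def product_prob_space_axioms_def product_sigma_finite_def prob_space_imp_sigma_finite)
  have Dfin: "finite_measure D" using D by (simp add: prob_space_def)
  let ?M = "Pi\<^sub>M {..<n} (\<lambda>_. D)"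
  let ?M' = "Pi\<^sub>M (insert n {..<n}) (\<lambda>_. D)"
  have ins: "{..<Suc n} = insert n {..<n}" by auto
  interpret PP: prob_space ?M by (rule prob_space_PiM) (simp add: D)
  interpret PQ: prob_space ?M' by (rule prob_space_PiM) (simp add: D)
  have gm[measurable]: "g \<in> borel_measurable ?M'" using Suc.prems(1) ins by simp
  have gK: "\<And>S. S \<in> space ?M' \<Longrightarrow> \<bar>g S\<bar> \<le> K" using Suc.prems(2) ins by auto
  have gc: "\<And>i S z. i < Suc n \<Longrightarrow> S \<in> space ?M' \<Longrightarrow> z \<in> space D \<Longrightarrow> \<bar>g S - g (S(i:=z))\<bar> \<le> c i"
    using Suc.prems(3) unfolding ins by blast
  define h where "h = (\<lambda>x. \<integral>z. g (x(n:=z)) \<partial>D)"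
  have upd: "\<And>x z. x \<in> space ?M \<Longrightarrow> z \<in> space D \<Longrightarrow> x(n:=z) \<in> space ?M'"
    by (rule upd_space_ins) auto
  have gxm: "\<And>x. x \<in> space ?M \<Longrightarrow> (\<lambda>z. g (x(n:=z))) \<in> borel_measurable D"
    by (rule measurable_compose[OF measurable_component_update gm]) auto
  have hm: "h \<in> borel_measurable ?M"
    unfolding h_def
    by (rule sigma_finite_measure.borel_measurable_lebesgue_integral[OF prob_space_imp_sigma_finite[OF D]]) measurable
  have hK: "\<forall>x\<in>space ?M. \<bar>h x\<bar> \<le> K"
    unfolding h_def using gxm gK upd by (intro ballI abs_integral_bound[OF D]) auto
  have hc: "\<forall>i<n. \<forall>x\<in>space ?M. \<forall>z'\<in>space D. \<bar>h x - h (x(i:=z'))\<bar> \<le> c i"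
  proof (intro allI impI ballI)
    fix i x z' assume i: "i < n" and x: "x \<in> space ?M" and z': "z' \<in> space D"
    have x': "x(i:=z') \<in> space ?M" using upd_space_in[OF x _ z'] i by auto
    have int1: "integrable D (\<lambda>z. g (x(n:=z)))"
      using gxm[OF x] gK upd[OF x] by (intro finite_measure.integrable_const_bound[OF Dfin, where B=K]) auto
    have int2: "integrable D (\<lambda>z. g ((x(i:=z'))(n:=z)))"
      using gxm[OF x'] gK upd[OF x'] by (intro finite_measure.integrable_const_bound[OF Dfin, where B=K]) auto
    have "h x - h (x(i:=z')) = (\<integral>z. g (x(n:=z)) - g ((x(n:=z))(i:=z')) \<partial>D)"
      unfolding h_def using int1 int2 i by (simp add: fun_upd_twist)
    also have "\<bar>\<dots>\<bar> \<le> c i"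
    proof (rule abs_integral_bound[OF D])
      show "(\<lambda>z. g (x(n := z)) - g (x(n := z, i := z'))) \<in> borel_measurable D"
        using gxm[OF x] gxm[OF x'] i by (simp add: fun_upd_twist)
      fix z assume "z \<in> space D"
      then show "\<bar>g (x(n := z)) - g (x(n := z, i := z'))\<bar> \<le> c i"
        using gc[OF _ upd[OF x] z'] i by auto
    qed
    finally show "\<bar>h x - h (x(i:=z'))\<bar> \<le> c i" .
  qed
  have IH: "(\<integral>\<^sup>+x. ennreal (exp (l * (h x - (\<integral>x'. h x' \<partial>?M)))) \<partial>?M)
       \<le> ennreal (exp (l\<^sup>2 * (\<Sum>i<n. (c i)\<^sup>2) / 8))"
    by (rule Suc.IH[OF hm hK hc])
  have gint: "integrable ?M' g"
    using gK by (intro PQ.integrable_const_bound[where B=K]) auto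
  have Eg: "(\<integral>S. g S \<partial>?M') = (\<integral>x. h x \<partial>?M)"
    unfolding h_def by (rule product_integral_insert[OF _ _ gint]) auto
  have hoef: "(\<integral>\<^sup>+z. ennreal (exp (l * (g (x(n:=z)) - h x))) \<partial>D) \<le> ennreal (exp (l\<^sup>2 * (c n)\<^sup>2 / 8))"
    if x: "x \<in> space ?M" for x
  proof -
    define V where "V = (\<lambda>z. g (x(n:=z))) ` space D"
    define a where "a = Inf V"
    have Vne: "V \<noteq> {}" using prob_space.not_empty[OF D] by (simp add: V_def)
    have lowK: "-K \<le> g (x(n:=z))" if z: "z \<in> space D" for z
      using gK[OF upd[OF x z]] by arith
    have Vb: "bdd_below V" unfolding V_def bdd_below_def using lowK
      by (intro exI[of _ "-K"]) auto
    have lo: "a \<le> g (x(n:=z))" if "z \<in> space D" for z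
      unfolding a_def by (rule cInf_lower[OF _ Vb]) (use that in \<open>auto simp: V_def\<close>)
    have hi: "g (x(n:=z)) \<le> a + c n" if z: "z \<in> space D" for z
    proof -
      have "g (x(n:=z)) - c n \<le> a"
        unfolding a_def
      proof (rule cInf_greatest[OF Vne])
        fix v assume "v \<in> V"
        then obtain w where w: "w \<in> space D" "v = g (x(n:=w))" by (auto simp: V_def)
        have "\<bar>g (x(n:=w)) - g ((x(n:=w))(n:=z))\<bar> \<le> c n"
          by (rule gc[OF _ upd[OF x w(1)] z]) auto
        then show "g (x(n:=z)) - c n \<le> v" using w by auto
      qed
      then show ?thesis by simp
    qed
    interpret B: interval_bounded_random_variable D "\<lambda>z. g (x(n:=z))" a "a + c n"
      by unfold_locales (use gxm[OF x] lo hi in auto)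
    have "(\<integral>\<^sup>+z. ennreal (exp (l * (g (x(n:=z)) - integral\<^sup>L D (\<lambda>z. g (x(n:=z)))))) \<partial>D)
       \<le> ennreal (exp (l\<^sup>2 * (a + c n - a)\<^sup>2 / 8))"
      by (rule B.Hoeffdings_lemma_nn_integral[OF l])
    then show ?thesis by (simp add: h_def)
  qed
  have "(\<integral>\<^sup>+S. ennreal (exp (l * (g S - (\<integral>S'. g S' \<partial>?M')))) \<partial>?M')
      = (\<integral>\<^sup>+x. (\<integral>\<^sup>+z. ennreal (exp (l * (g (x(n:=z)) - (\<integral>x'. h x' \<partial>?M)))) \<partial>D) \<partial>?M)"
    unfolding Eg by (rule product_nn_integral_insert) auto
  also have "\<dots> = (\<integral>\<^sup>+x. ennreal (exp (l * (h x - (\<integral>x'. h x' \<partial>?M)))) *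
                  (\<integral>\<^sup>+z. ennreal (exp (l * (g (x(n:=z)) - h x))) \<partial>D) \<partial>?M)"
  proof (intro nn_integral_cong)
    fix x assume x: "x \<in> space ?M"
    have "(\<integral>\<^sup>+z. ennreal (exp (l * (g (x(n:=z)) - (\<integral>x'. h x' \<partial>?M)))) \<partial>D)
       = (\<integral>\<^sup>+z. ennreal (exp (l * (h x - (\<integral>x'. h x' \<partial>?M)))) * ennreal (exp (l * (g (x(n:=z)) - h x))) \<partial>D)"
      by (intro nn_integral_cong) (simp add: ennreal_mult[symmetric] exp_add[symmetric] algebra_simps)
    also have "\<dots> = ennreal (exp (l * (h x - (\<integral>x'. h x' \<partial>?M)))) * (\<integral>\<^sup>+z. ennreal (exp (l * (g (x(n:=z)) - h x))) \<partial>D)"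
      by (rule nn_integral_cmult) (use gxm[OF x] in measurable)
    finally show "(\<integral>\<^sup>+z. ennreal (exp (l * (g (x(n:=z)) - (\<integral>x'. h x' \<partial>?M)))) \<partial>D)
       = ennreal (exp (l * (h x - (\<integral>x'. h x' \<partial>?M)))) * (\<integral>\<^sup>+z. ennreal (exp (l * (g (x(n:=z)) - h x))) \<partial>D)" .
  qed
  also have "\<dots> \<le> (\<integral>\<^sup>+x. ennreal (exp (l * (h x - (\<integral>x'. h x' \<partial>?M)))) * ennreal (exp (l\<^sup>2 * (c n)\<^sup>2 / 8)) \<partial>?M)"
    by (intro nn_integral_mono mult_left_mono hoef) auto
  also have "\<dots> = (\<integral>\<^sup>+x. ennreal (exp (l * (h x - (\<integral>x'. h x' \<partial>?M)))) \<partial>?M) * ennreal (exp (l\<^sup>2 * (c n)\<^sup>2 / 8))"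
    by (rule nn_integral_multc) (use hm in measurable)
  also have "\<dots> \<le> ennreal (exp (l\<^sup>2 * (\<Sum>i<n. (c i)\<^sup>2) / 8)) * ennreal (exp (l\<^sup>2 * (c n)\<^sup>2 / 8))"
    by (intro mult_right_mono IH) auto
  also have "\<dots> = ennreal (exp (l\<^sup>2 * (\<Sum>i<Suc n. (c i)\<^sup>2) / 8))"
    by (simp add: ennreal_mult[symmetric] exp_add[symmetric] add_divide_distrib distrib_left)
  finally show ?case using ins by simp
qed


lemma mcdiarmid_tail:
  fixes D :: "'z measure" and c :: "nat \<Rightarrow> real" and g :: "(nat \<Rightarrow> 'z) \<Rightarrow> real"
  assumes D: "prob_space D"
    and gm: "g \<in> borel_measurable (Pi\<^sub>M {..<n} (\<lambda>_. D))"
    and gK: "\<forall>S\<in>space (Pi\<^sub>M {..<n} (\<lambda>_. D)). \<bar>g S\<bar> \<le> K"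
    and gc: "\<forall>i<n. \<forall>S\<in>space (Pi\<^sub>M {..<n} (\<lambda>_. D)). \<forall>z\<in>space D. \<bar>g S - g (S(i:=z))\<bar> \<le> c i"
    and t: "t > 0" and C: "(\<Sum>i<n. (c i)\<^sup>2) > 0"
  shows "measure (Pi\<^sub>M {..<n} (\<lambda>_. D)) {S\<in>space (Pi\<^sub>M {..<n} (\<lambda>_. D)). g S - (\<integral>S'. g S' \<partial>Pi\<^sub>M {..<n} (\<lambda>_. D)) \<ge> t}
         \<le> exp (-2 * t\<^sup>2 / (\<Sum>i<n. (c i)\<^sup>2))"
proof -
  let ?M = "Pi\<^sub>M {..<n} (\<lambda>_. D)"
  interpret PP: prob_space ?M by (rule prob_space_PiM) (simp add: D)
  define d where "d = (\<Sum>i<n. (c i)\<^sup>2)"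
  define E where "E = (\<integral>S'. g S' \<partial>?M)"
  define l where "l = 4 * t / d"
  have d: "d > 0" using C by (simp add: d_def)
  have l: "l > 0" using t d by (simp add: l_def)
  note gm[measurable]
  have "ennreal (measure ?M {S\<in>space ?M. g S - E \<ge> t}) = emeasure ?M {S\<in>space ?M. g S - E \<ge> t}"
    by (simp add: PP.emeasure_eq_measure)
  also have "\<dots> \<le> ennreal (exp (-l*t)) * (\<integral>\<^sup>+x. ennreal (exp (l * (g x - E))) * indicator (space ?M) x \<partial>?M)"
    by (intro Chernoff_ineq_nn_integral_ge l) auto
  also have "(\<integral>\<^sup>+x. ennreal (exp (l * (g x - E))) * indicator (space ?M) x \<partial>?M) = (\<integral>\<^sup>+x. ennreal (exp (l * (g x - E))) \<partial>?M)"
    by (intro nn_integral_cong) auto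
  also have "\<dots> \<le> ennreal (exp (l\<^sup>2 * d / 8))"
    unfolding E_def d_def by (rule mgf_bound[OF D l gm gK gc])
  also have "ennreal (exp (-l*t)) * ennreal (exp (l\<^sup>2 * d / 8)) = ennreal (exp (d * l\<^sup>2 / 8 - l * t))"
    by (simp add: ennreal_mult[symmetric] exp_add[symmetric] algebra_simps)
  also have "d * l\<^sup>2 / 8 - l * t = -2 * t\<^sup>2 / d"
    using d by (simp add: l_def field_simps power2_eq_square)
  finally have "ennreal (measure ?M {S\<in>space ?M. g S - E \<ge> t}) \<le> ennreal (exp (-2 * t\<^sup>2 / d))"
    by (simp add: mult_left_mono)
  then show ?thesis by (simp add: E_def d_def ennreal_le_iff)
qed

lemma bounded_by_diffs:
  fixes D :: "'z measure" and c :: "nat \<Rightarrow> real" and g :: "(nat \<Rightarrow> 'z) \<Rightarrow> real"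
  assumes gc: "\<forall>i<n. \<forall>S\<in>space (Pi\<^sub>M {..<n} (\<lambda>_. D)). \<forall>z\<in>space D. \<bar>g S - g (S(i:=z))\<bar> \<le> c i"
    and S: "S \<in> space (Pi\<^sub>M {..<n} (\<lambda>_. D))" and S0: "S0 \<in> space (Pi\<^sub>M {..<n} (\<lambda>_. D))"
  shows "\<bar>g S - g S0\<bar> \<le> (\<Sum>i<n. c i)"
proof -
  define T where "T = (\<lambda>k. (\<lambda>i. if i < k then S0 i else S i))"
  have Tsp: "T k \<in> space (Pi\<^sub>M {..<n} (\<lambda>_. D))" for k
    using S S0 by (auto simp: T_def space_PiM PiE_def extensional_def Pi_iff)
  have "k \<le> n \<Longrightarrow> \<bar>g S - g (T k)\<bar> \<le> (\<Sum>i<k. c i)" for k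
  proof (induction k)
    case 0
    have "T 0 = S" by (simp add: T_def)
    then show ?case by simp
  next
    case (Suc k)
    have eq: "T (Suc k) = (T k)(k := S0 k)" by (auto simp: T_def)
    have "S0 k \<in> space D" using S0 Suc.prems by (auto simp: space_PiM PiE_def)
    then have "\<bar>g (T k) - g (T (Suc k))\<bar> \<le> c k"
      using gc Tsp Suc.prems unfolding eq by auto
    then show ?case using Suc by simp
  qed
  moreover have "T n = S0"
    using S S0 by (auto simp: T_def space_PiM PiE_def extensional_def fun_eq_iff)
  ultimately show ?thesis by fastforce
qed


theorem theorem3p2:
  fixes H :: "'h measure" and D :: "'z measure" and m :: nat
    and f :: "real \<Rightarrow> real" and I :: "real set"
    and \<Gamma> :: "('h \<Rightarrow> real) set" and P :: "'h measure" and \<delta> :: real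
    and \<phi> :: "(nat \<Rightarrow> 'z) \<Rightarrow> 'h \<Rightarrow> real"
    and B :: "('h \<Rightarrow> real) \<Rightarrow> real" and c :: "nat \<Rightarrow> real"
  assumes D: "prob_space D"
    and I: "is_interval I" and f: "convex_on I f"
    and Gamma: "\<Gamma> \<subseteq> bounded_measurable H"
    and P: "P \<in> prob_dists H"
    and delta: "0 < \<delta>" "\<delta> \<le> 1"
    and phi: "\<And>S. S \<in> space (PiM {..<m} (\<lambda>_. D)) \<Longrightarrow> \<phi> S \<in> \<Gamma>"
    and B_bound: "\<And>S. S \<in> space (PiM {..<m} (\<lambda>_. D)) \<Longrightarrow> Lambda_f I f P (\<phi> S) \<le> ereal (B (\<phi> S))"
    and B_meas: "(\<lambda>S. B (\<phi> S)) \<in> borel_measurable (PiM {..<m} (\<lambda>_. D))"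
    and bdd_diff: "\<And>i S z'. i < m \<Longrightarrow> S \<in> space (PiM {..<m} (\<lambda>_. D)) \<Longrightarrow> z' \<in> space D \<Longrightarrow>
        \<bar>B (\<phi> S) - B (\<phi> (S(i := z')))\<bar> \<le> c i"
  shows "\<exists>A \<in> sets (PiM {..<m} (\<lambda>_. D)).
           measure (PiM {..<m} (\<lambda>_. D)) A \<ge> 1 - \<delta> \<and>
           (\<forall>S\<in>A. \<forall>\<rho>\<in>prob_dists H.
              ereal (\<integral>h. \<phi> S h \<partial>\<rho>)
              \<le> fGamma_div I f \<Gamma> \<rho> P
                 + ereal (\<integral>S'. B (\<phi> S') \<partial>(PiM {..<m} (\<lambda>_. D)))
                 + ereal (sqrt (ln (1 / \<delta>) / 2 * (\<Sum>i<m. (c i)\<^sup>2))))"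
  proof -
  let ?M = "Pi\<^sub>M {..<m} (\<lambda>_. D)"
  define g where "g = (\<lambda>S. B (\<phi> S))"
  have gm[measurable]: "g \<in> borel_measurable ?M" using B_meas by (simp add: g_def)
  interpret PP: prob_space ?M by (rule prob_space_PiM) (simp add: D)
  obtain S0 where S0: "S0 \<in> space ?M" using PP.not_empty by blast
  have gc: "\<forall>i<m. \<forall>S\<in>space ?M. \<forall>z\<in>space D. \<bar>g S - g (S(i:=z))\<bar> \<le> c i"
    using bdd_diff by (simp add: g_def)
  have gS0: "\<bar>g S - g S0\<bar> \<le> (\<Sum>i<m. c i)" if "S \<in> space ?M" for S
    by (rule bounded_by_diffs[OF gc that S0])
  define K where "K = \<bar>g S0\<bar> + (\<Sum>i<m. c i)"
  have gK: "\<forall>S\<in>space ?M. \<bar>g S\<bar> \<le> K"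
    using gS0 unfolding K_def by force
  define E where "E = (\<integral>S'. g S' \<partial>?M)"
  define C where "C = (\<Sum>i<m. (c i)\<^sup>2)"
  define t where "t = sqrt (ln (1 / \<delta>) / 2 * C)"
  have C0: "C \<ge> 0" unfolding C_def by (intro sum_nonneg) auto
  have ln0: "ln (1 / \<delta>) \<ge> 0" using delta by simp
  have t0: "t \<ge> 0" unfolding t_def using C0 ln0 by simp
  define A where "A = {S\<in>space ?M. g S \<le> E + t}"
  have Asets: "A \<in> sets ?M" unfolding A_def by measurable
  have compl: "measure ?M (space ?M - A) \<le> \<delta>"
  proof (cases "C = 0")
    case True
    have "\<forall>i\<in>{..<m}. (c i)\<^sup>2 = 0"
      using True unfolding C_def by (subst sum_nonneg_eq_0_iff[symmetric]) auto
    then have "(\<Sum>i<m. c i) = 0" by simp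
    then have geq: "g S = g S0" if "S \<in> space ?M" for S using gS0[OF that] by simp
    have "E = (\<integral>S'. g S0 \<partial>?M)"
      unfolding E_def by (intro Bochner_Integration.integral_cong) (auto simp: geq)
    also have "\<dots> = g S0" by (simp add: PP.prob_space)
    finally have e: "space ?M - A = {}" using t0 geq unfolding A_def by auto
    have "measure ?M (space ?M - A) = 0" unfolding e by simp
    then show ?thesis using delta by simp
  next
    case False
    then have Cp: "C > 0" using C0 by simp
    show ?thesis
    proof (cases "t = 0")
      case True
      then have "ln (1 / \<delta>) = 0" using Cp ln0 unfolding t_def by simp
      then have "\<delta> = 1" using delta by simp
      then show ?thesis by simp
    next
      case False
      then have tp: "t > 0" using t0 by simp
      have "measure ?M (space ?M - A) \<le> measure ?M {S\<in>space ?M. g S - E \<ge> t}"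
        by (intro PP.finite_measure_mono) (auto simp: A_def)
      also have "\<dots> \<le> exp (-2 * t\<^sup>2 / C)"
        unfolding E_def C_def by (rule mcdiarmid_tail[OF D gm gK gc tp]) (use Cp in \<open>simp add: C_def\<close>)
      also have "t\<^sup>2 = ln (1 / \<delta>) / 2 * C" unfolding t_def using C0 ln0 by simp
      also have "-2 * (ln (1 / \<delta>) / 2 * C) / C = ln \<delta>" using Cp delta by (simp add: ln_div)
      also have "exp (ln \<delta>) = \<delta>" using delta by simp
      finally show ?thesis .
    qed
  qed
  have mA: "measure ?M A \<ge> 1 - \<delta>"
    using compl PP.prob_compl[OF Asets] by simp
  show ?thesis
  proof (intro bexI[OF _ Asets] conjI mA ballI)
    fix S \<rho> assume S: "S \<in> A" and \<rho>: "\<rho> \<in> prob_dists H"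
    have Ssp: "S \<in> space ?M" using S by (simp add: A_def)
    have gle: "g S \<le> E + t" using S by (simp add: A_def)
    have div: "ereal (\<integral>h. \<phi> S h \<partial>\<rho>) - Lambda_f I f P (\<phi> S) \<le> fGamma_div I f \<Gamma> \<rho> P"
      unfolding fGamma_div_def using phi[OF Ssp] by (rule SUP_upper)
    have Lb: "Lambda_f I f P (\<phi> S) \<le> ereal (g S)" using B_bound[OF Ssp] by (simp add: g_def)
    have "ereal (\<integral>h. \<phi> S h \<partial>\<rho>) \<le> fGamma_div I f \<Gamma> \<rho> P + ereal E + ereal t"
    proof (cases "Lambda_f I f P (\<phi> S)")
      case (real L)
      then have "L \<le> g S" using Lb by simp
      moreover have "ereal ((\<integral>h. \<phi> S h \<partial>\<rho>) - L) \<le> fGamma_div I f \<Gamma> \<rho> P" using div real by simp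
      ultimately show ?thesis using gle
        by (cases "fGamma_div I f \<Gamma> \<rho> P") auto
    next
      case PInf
      then show ?thesis using Lb by simp
    next
      case MInf
      then have "fGamma_div I f \<Gamma> \<rho> P = \<infinity>" using div by simp
      then show ?thesis by simp
    qed
    then show "ereal (\<integral>h. \<phi> S h \<partial>\<rho>)
              \<le> fGamma_div I f \<Gamma> \<rho> P
                 + ereal (\<integral>S'. B (\<phi> S') \<partial>(PiM {..<m} (\<lambda>_. D)))
                 + ereal (sqrt (ln (1 / \<delta>) / 2 * (\<Sum>i<m. (c i)\<^sup>2)))"
      by (simp add: E_def t_def C_def g_def)
  qed
qed

end
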